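(* For every $t=0,1,\dots,T-2$, $H_t(\bar I_t-\theta)>H_t(I_t)+K_t$.
   Context: Model. Fix an integer horizon $T\ge 2$, a discount factor $\alpha\in(0,1]$, and for $t=0,\dots,T-1$: unit ordering costs $c_t\in\mathbb R$, a salvage coefficient $c_T\in\mathbb R$, setup costs $K_t\ge 0$, functions $G_t:\mathbb R\to\mathbb R$, and independent nonnegative random demands $D_0,\dots,D_{T-1}$ with right-continuous distribution functions $F_t$ and finite means; all expectations appearing are assumed finite. Put $C_t(y)=(c_t-\alpha c_{t+1})y+G_t(y)+\alpha c_{t+1}E[D_t]$. Standing assumptions: (i) each $C_t$ is convex with $C_t(y)\to+\infty$ as $|y|\to\infty$; (ii) $K_t\ge \alpha K_{t+1}$ for $t=0,\dots,T-2$. Grid construction. Fix $\theta>0$, $z_m=m\theta$, $Z_\theta=\{z_m:m\in\mathbb Z\}$, $f_t(n)=F_t(z_{n+1})-F_t(z_n)$ ($n\ge -1$). $C^m_t=\min\{y: C_t(y)=\min_x C_t(x)\}$; with $z_{n_0}<C^m_t\le z_{n_0+1}$, $S^U_t=\min\{z_m\in Z_\theta: z_m\ge C^m_t,\ C_t(z_m)>C_t(z_{n_0})+K_t\}$. $s_{T-1}$ is a point with $s_{T-1}\le C^m_{T-1}$, $C_{T-1}(s_{T-1})=C_{T-1}(C^m_{T-1})+K_{T-1}$; $\bar I_{T-1}=s_{T-1}$. For $t=T-2,\dots,0$: $I_t=\max\{z_m\in Z_\theta: z_m<\min(\bar I_{t+1}-\theta,C^m_t)\}$, $\bar I_t=\max\{z_m\in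 Z_\theta: z_m\le I_t,\ C_t(z_m)>C_t(I_t)+K_t\}+\theta$. $H_{T-1}=C_{T-1}$, $S_{T-1}=C^m_{T-1}$; $V_t(y)=H_t(S_t)+K_t$ for $y<s_t$, $V_t(y)=H_t(y)$ for $y\ge s_t$. For $t=T-2,\dots,0$: $H_t(y)=C_t(y)+\alpha\sum_{n=-1}^\infty V_{t+1}(y-z_n)f_t(n)$; $S_t=\max\{z_m\in Z_\theta: I_t\le z_m\le S^U_t,\ H_t(z_m)=\min\{H_t(z_n):z_n\in Z_\theta, I_t\le z_n\le S^U_t\}\}$; $s_t=S_t$ if $K_t=0$, else $s_t=\min\{z_m\in Z_\theta:\bar I_t\le z_m\le S_t,\ H_t(z_m)\le H_t(S_t)+K_t\}$. *)

theory Defs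
  imports "HOL-Probability.Probability"
begin

text \<open>Single-period cost C_t(y) = (c_t - alpha c_{t+1}) y + G_t(y) + alpha c_{t+1} E[D_t].
  The demand D_t is represented by its distribution, a real measure; c T is the salvage coefficient.\<close>
definition Cfun :: "real \<Rightarrow> (nat \<Rightarrow> real) \<Rightarrow> (nat \<Rightarrow> real \<Rightarrow> real) \<Rightarrow> (nat \<Rightarrow> real measure)
    \<Rightarrow> nat \<Rightarrow> real \<Rightarrow> real" where
  "Cfun \<alpha> c G D t y = (c t - \<alpha> * c (Suc t)) * y + G t y + \<alpha> * c (Suc t) * (\<integral>x. x \<partial>(D t))"

definition grid :: "real \<Rightarrow> real set" where
  "grid \<theta> = {of_int m * \<theta> | m. True}"

definition CM :: "(nat \<Rightarrow> real \<Rightarrow> real) \<Rightarrow> nat \<Rightarrow> real" where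
  "CM C t = (LEAST y. \<forall>x. C t y \<le> C t x)"

definition gbelow :: "real \<Rightarrow> real \<Rightarrow> real" where
  "gbelow \<theta> a = (GREATEST z. z \<in> grid \<theta> \<and> z < a)"

text \<open>S^U_t (note z_{n0} = gbelow theta (CM C t)).\<close>
definition SU :: "(nat \<Rightarrow> real \<Rightarrow> real) \<Rightarrow> (nat \<Rightarrow> real) \<Rightarrow> real \<Rightarrow> nat \<Rightarrow> real" where
  "SU C K \<theta> t = (LEAST z. z \<in> grid \<theta> \<and> z \<ge> CM C t \<and> C t z > C t (gbelow \<theta> (CM C t)) + K t)"

definition sLast :: "(nat \<Rightarrow> real \<Rightarrow> real) \<Rightarrow> (nat \<Rightarrow> real) \<Rightarrow> nat \<Rightarrow> real" where
  "sLast C K T = (SOME s. s \<le> CM C (T - 1) \<and> C (T - 1) s = C (T - 1) (CM C (T - 1)) + K (T - 1))"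

definition fmass :: "(nat \<Rightarrow> real measure) \<Rightarrow> real \<Rightarrow> nat \<Rightarrow> int \<Rightarrow> real" where
  "fmass D \<theta> t n = measure (D t) {..of_int (n + 1) * \<theta>} - measure (D t) {..of_int n * \<theta>}"

record stage =
  stH :: "real \<Rightarrow> real"
  stS :: real
  sts :: real
  stIbar :: real
  stI :: real

text \<open>Backward recursion: stage k describes period t = T - 1 - k.\<close>
fun stg :: "(nat \<Rightarrow> real \<Rightarrow> real) \<Rightarrow> (nat \<Rightarrow> real) \<Rightarrow> real \<Rightarrow> real \<Rightarrow> (nat \<Rightarrow> real measure)
    \<Rightarrow> nat \<Rightarrow> nat \<Rightarrow> stage" where
  "stg C K \<alpha> \<theta> D T 0 =
     \<lparr> stH = C (T - 1), stS = CM C (T - 1), sts = sLast C K T, stIbar = sLast C K T, stI = undefined \<rparr>"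
| "stg C K \<alpha> \<theta> D T (Suc k) =
     (let p = stg C K \<alpha> \<theta> D T k;
          t = T - 2 - k;
          I = gbelow \<theta> (min (stIbar p - \<theta>) (CM C t));
          Ibar = (GREATEST z. z \<in> grid \<theta> \<and> z \<le> I \<and> C t z > C t I + K t) + \<theta>;
          V = (\<lambda>y. if y < sts p then stH p (stS p) + K (Suc t) else stH p y);
          H = (\<lambda>y. C t y + \<alpha> * (\<Sum>j. V (y - of_int (int j - 1) * \<theta>) * fmass D \<theta> t (int j - 1)));
          S = (GREATEST z. z \<in> grid \<theta> \<and> I \<le> z \<and> z \<le> SU C K \<theta> t \<and>
                 (\<forall>w. w \<in> grid \<theta> \<and> I \<le> w \<and> w \<le> SU C K \<theta> t \<longrightarrow> H z \<le> H w));
          s = (if K t = 0 then S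
               else (LEAST z. z \<in> grid \<theta> \<and> Ibar \<le> z \<and> z \<le> S \<and> H z \<le> H S + K t))
      in \<lparr> stH = H, stS = S, sts = s, stIbar = Ibar, stI = I \<rparr>)"

definition Hf where "Hf C K \<alpha> \<theta> D T t = stH (stg C K \<alpha> \<theta> D T (T - 1 - t))"
definition Ibarf where "Ibarf C K \<alpha> \<theta> D T t = stIbar (stg C K \<alpha> \<theta> D T (T - 1 - t))"
definition If where "If C K \<alpha> \<theta> D T t = stI (stg C K \<alpha> \<theta> D T (T - 1 - t))"

end

theory Submission
  imports Defs
begin

lemma grid_mem: "of_int m * \<theta> \<in> grid \<theta>" by (auto simp: grid_def)

lemma grid_finite:
  assumes "\<theta> > 0" shows "finite {z \<in> grid \<theta>. a \<le> z \<and> z \<le> b}"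
proof -
  have "{z \<in> grid \<theta>. a \<le> z \<and> z \<le> b} \<subseteq> (\<lambda>m. of_int m * \<theta>) ` {\<lfloor>a/\<theta>\<rfloor>..\<lceil>b/\<theta>\<rceil>}"
  proof
    fix z assume "z \<in> {z \<in> grid \<theta>. a \<le> z \<and> z \<le> b}"
    then obtain m where z: "z = of_int m * \<theta>" "a \<le> of_int m * \<theta>" "of_int m * \<theta> \<le> b"
      by (auto simp: grid_def)
    have "a/\<theta> \<le> of_int m" using z assms by (simp add: divide_le_eq)
    hence 1: "\<lfloor>a/\<theta>\<rfloor> \<le> m" by linarith
    have "of_int m \<le> b/\<theta>" using z assms by (simp add: le_divide_eq)
    hence 2: "m \<le> \<lceil>b/\<theta>\<rceil>" by linarith
    show "z \<in> (\<lambda>m. of_int m * \<theta>) ` {\<lfloor>a/\<theta>\<rfloor>..\<lceil>b/\<theta>\<rceil>}" using 1 2 z by auto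
  qed
  thus ?thesis by (rule finite_subset) auto
qed

lemma grid_greatest:
  assumes "\<theta> > 0" "A \<subseteq> grid \<theta>" "z0 \<in> A" "\<forall>w\<in>A. w \<le> b"
  shows "\<exists>z\<in>A. \<forall>w\<in>A. w \<le> z"
proof -
  let ?F = "{w\<in>A. z0 \<le> w}"
  have "?F \<subseteq> {z \<in> grid \<theta>. z0 \<le> z \<and> z \<le> b}" using assms by auto
  hence fin: "finite ?F" using grid_finite[OF assms(1)] finite_subset by blast
  have ne: "?F \<noteq> {}" using assms by auto
  have "Max ?F \<in> A" using Max_in[OF fin ne] by auto
  moreover have "\<forall>w\<in>A. w \<le> Max ?F"
  proof
    fix w assume w: "w \<in> A"
    show "w \<le> Max ?F"
    proof (cases "z0 \<le> w")
      case True thus ?thesis using w fin by auto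
    next
      case False thus ?thesis using Max_ge[OF fin, of z0] assms(3) by auto
    qed
  qed
  ultimately show ?thesis by blast
qed

lemma grid_least:
  assumes "\<theta> > 0" "A \<subseteq> grid \<theta>" "z0 \<in> A" "\<forall>w\<in>A. b \<le> w"
  shows "\<exists>z\<in>A. \<forall>w\<in>A. z \<le> w"
proof -
  let ?F = "{w\<in>A. w \<le> z0}"
  have "?F \<subseteq> {z \<in> grid \<theta>. b \<le> z \<and> z \<le> z0}" using assms by auto
  hence fin: "finite ?F" using grid_finite[OF assms(1)] finite_subset by blast
  have ne: "?F \<noteq> {}" using assms by auto
  have "Min ?F \<in> A" using Min_in[OF fin ne] by auto
  moreover have "\<forall>w\<in>A. Min ?F \<le> w"
  proof
    fix w assume w: "w \<in> A"
    show "Min ?F \<le> w"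
    proof (cases "w \<le> z0")
      case True thus ?thesis using w fin by auto
    next
      case False thus ?thesis using Min_le[OF fin, of z0] assms(3) by auto
    qed
  qed
  ultimately show ?thesis by blast
qed

lemma greatest_grid:
  assumes "\<theta> > 0" "P z0" "z0 \<in> grid \<theta>" "\<And>w. P w \<Longrightarrow> w \<le> b"
  shows "(GREATEST z. z \<in> grid \<theta> \<and> P z) \<in> grid \<theta> \<and> P (GREATEST z. z \<in> grid \<theta> \<and> P z)"
proof -
  obtain z where z: "z \<in> {z. z \<in> grid \<theta> \<and> P z}" "\<forall>w\<in>{z. z \<in> grid \<theta> \<and> P z}. w \<le> z"
    using grid_greatest[OF assms(1), of "{z. z \<in> grid \<theta> \<and> P z}" z0 b] assms by auto
  have "(GREATEST z. z \<in> grid \<theta> \<and> P z) = z"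
    by (rule Greatest_equality) (use z in auto)
  thus ?thesis using z by auto
qed

lemma least_grid:
  assumes "\<theta> > 0" "P z0" "z0 \<in> grid \<theta>" "\<And>w. P w \<Longrightarrow> b \<le> w"
  shows "(LEAST z. z \<in> grid \<theta> \<and> P z) \<in> grid \<theta> \<and> P (LEAST z. z \<in> grid \<theta> \<and> P z)"
proof -
  obtain z where z: "z \<in> {z. z \<in> grid \<theta> \<and> P z}" "\<forall>w\<in>{z. z \<in> grid \<theta> \<and> P z}. z \<le> w"
    using grid_least[OF assms(1), of "{z. z \<in> grid \<theta> \<and> P z}" z0 b] assms by auto
  have "(LEAST z. z \<in> grid \<theta> \<and> P z) = z"
    by (rule Least_equality) (use z in auto)
  thus ?thesis using z by auto
qed

lemma gbelow_props:
  assumes "\<theta> > 0" shows "gbelow \<theta> a \<in> grid \<theta> \<and> gbelow \<theta> a < a"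
proof -
  let ?m = "\<lceil>a/\<theta>\<rceil> - 1"
  have "of_int ?m < a/\<theta>" by linarith
  hence "of_int ?m * \<theta> < a" using assms by (simp add: less_divide_eq)
  moreover have "of_int ?m * \<theta> \<in> grid \<theta>" by (rule grid_mem)
  ultimately show ?thesis unfolding gbelow_def
    using greatest_grid[OF assms, of "\<lambda>z. z < a" "of_int ?m * \<theta>" a] by auto
qed

lemma grid_left:
  assumes "\<theta> > 0" shows "\<exists>z\<in>grid \<theta>. z \<le> x"
proof -
  have "of_int \<lfloor>x/\<theta>\<rfloor> \<le> x/\<theta>" by linarith
  hence "of_int \<lfloor>x/\<theta>\<rfloor> * \<theta> \<le> x" using assms by (simp add: le_divide_eq)
  thus ?thesis using grid_mem by blast
qed

lemma grid_right:
  assumes "\<theta> > 0" shows "\<exists>z\<in>grid \<theta>. x \<le> z"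
proof -
  have "x/\<theta> \<le> of_int \<lceil>x/\<theta>\<rceil>" by linarith
  hence "x/\<theta> * \<theta> \<le> of_int \<lceil>x/\<theta>\<rceil> * \<theta>" using assms by (intro mult_right_mono) auto
  hence "x \<le> of_int \<lceil>x/\<theta>\<rceil> * \<theta>" using assms by simp
  thus ?thesis using grid_mem by blast
qed

lemma grid_diff:
  assumes "z \<in> grid \<theta>" "w \<in> grid \<theta>" "\<theta> > 0" "w < z" shows "w \<le> z - \<theta>"
proof -
  obtain m n where "z = of_int m * \<theta>" "w = of_int n * \<theta>" using assms by (auto simp: grid_def)
  moreover have "n < m" using assms calculation by (simp add: mult_less_cancel_right)
  hence "of_int n \<le> (of_int m - 1 :: real)" by linarith
  hence "of_int n * \<theta> \<le> (of_int m - 1) * \<theta>" using assms(3) by (simp add: mult_right_mono)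
  ultimately show ?thesis by (simp add: algebra_simps)
qed


lemma stage_step:
  fixes C :: "nat \<Rightarrow> real \<Rightarrow> real" and \<alpha> \<theta> :: real and D :: "nat \<Rightarrow> real measure"
    and K :: "nat \<Rightarrow> real" and T k :: nat
  assumes th: "\<theta> > 0" and Kt: "K (T - 2 - k) \<ge> 0"
    and coer: "\<And>B. \<exists>r. \<forall>x. r \<le> \<bar>x\<bar> \<longrightarrow> B < C (T - 2 - k) x"
  defines "q \<equiv> stg C K \<alpha> \<theta> D T (Suc k)" and "p \<equiv> stg C K \<alpha> \<theta> D T k"
  shows "stI q < stIbar p - \<theta> \<and> stIbar q - \<theta> \<le> stI q
      \<and> C (T - 2 - k) (stIbar q - \<theta>) > C (T - 2 - k) (stI q) + K (T - 2 - k)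
      \<and> stIbar q \<le> sts q
      \<and> stH q = (\<lambda>y. C (T - 2 - k) y + \<alpha> * (\<Sum>j. (if y - of_int (int j - 1) * \<theta> < sts p
            then stH p (stS p) + K (Suc (T - 2 - k)) else stH p (y - of_int (int j - 1) * \<theta>))
             * fmass D \<theta> (T - 2 - k) (int j - 1)))"
proof -
  define t where "t = T - 2 - k"
  define I where "I = gbelow \<theta> (min (stIbar p - \<theta>) (CM C t))"
  define Ib0 where "Ib0 = (GREATEST z. z \<in> grid \<theta> \<and> z \<le> I \<and> C t z > C t I + K t)"
  define V where "V = (\<lambda>y. if y < sts p then stH p (stS p) + K (Suc t) else stH p y)"
  define H where "H = (\<lambda>y. C t y + \<alpha> * (\<Sum>j. V (y - of_int (int j - 1) * \<theta>) * fmass D \<theta> t (int j - 1)))"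
  define SUv where "SUv = SU C K \<theta> t"
  define S where "S = (GREATEST z. z \<in> grid \<theta> \<and> I \<le> z \<and> z \<le> SUv \<and>
                 (\<forall>w. w \<in> grid \<theta> \<and> I \<le> w \<and> w \<le> SUv \<longrightarrow> H z \<le> H w))"
  define s where "s = (if K t = 0 then S
               else (LEAST z. z \<in> grid \<theta> \<and> Ib0 + \<theta> \<le> z \<and> z \<le> S \<and> H z \<le> H S + K t))"
  have q: "q = \<lparr> stH = H, stS = S, sts = s, stIbar = Ib0 + \<theta>, stI = I \<rparr>"
    unfolding q_def p_def t_def I_def Ib0_def V_def H_def SUv_def S_def s_def
    by (simp only: stg.simps Let_def)
  have coer': "\<And>B. \<exists>r. \<forall>x. r \<le> \<bar>x\<bar> \<longrightarrow> B < C t x" using coer unfolding t_def by blast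
  have Ig: "I \<in> grid \<theta>" and Ilt: "I < min (stIbar p - \<theta>) (CM C t)"
    using gbelow_props[OF th, of "min (stIbar p - \<theta>) (CM C t)"] unfolding I_def by blast+
  obtain r1 where r1: "\<forall>x. r1 \<le> \<bar>x\<bar> \<longrightarrow> C t I + K t < C t x" using coer' by blast
  obtain z1 where z1: "z1 \<in> grid \<theta>" "z1 \<le> min I (- \<bar>r1\<bar>)" using grid_left[OF th] by blast
  have z1P: "z1 \<le> I \<and> C t z1 > C t I + K t" using z1 r1 by auto
  have Ib: "Ib0 \<in> grid \<theta> \<and> Ib0 \<le> I \<and> C t Ib0 > C t I + K t"
    unfolding Ib0_def
    using greatest_grid[OF th, of "\<lambda>z. z \<le> I \<and> C t z > C t I + K t" z1 I] z1 z1P by auto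
  have "Ib0 \<noteq> I" using Ib Kt unfolding t_def by auto
  hence "Ib0 < I" using Ib by auto
  hence IbI: "Ib0 + \<theta> \<le> I" using grid_diff[OF Ig _ th] Ib by force
  obtain r2 where r2: "\<forall>x. r2 \<le> \<bar>x\<bar> \<longrightarrow> C t (gbelow \<theta> (CM C t)) + K t < C t x" using coer' by blast
  obtain z2 where z2: "z2 \<in> grid \<theta>" "max (CM C t) \<bar>r2\<bar> \<le> z2" using grid_right[OF th] by blast
  have z2P: "z2 \<ge> CM C t \<and> C t z2 > C t (gbelow \<theta> (CM C t)) + K t" using z2 r2 by auto
  have SUp: "SUv \<in> grid \<theta> \<and> SUv \<ge> CM C t"
    unfolding SUv_def SU_def
    using least_grid[OF th, of "\<lambda>z. z \<ge> CM C t \<and> C t z > C t (gbelow \<theta> (CM C t)) + K t" z2 "CM C t"]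
      z2 z2P by auto
  have ISU: "I \<le> SUv" using SUp Ilt by auto
  define B where "B = {z \<in> grid \<theta>. I \<le> z \<and> z \<le> SUv}"
  have finB: "finite B" unfolding B_def by (rule grid_finite[OF th])
  have IB: "I \<in> B" using Ig ISU unfolding B_def by auto
  have "Min (H ` B) \<in> H ` B" using finB IB by (intro Min_in) auto
  then obtain m where m: "m \<in> B" "H m = Min (H ` B)" by auto
  have mmin: "\<forall>w\<in>B. H m \<le> H w" using m finB by auto
  have Sp: "S \<in> grid \<theta> \<and> I \<le> S \<and> S \<le> SUv"
  proof -
    have "(GREATEST z. z \<in> grid \<theta> \<and> (I \<le> z \<and> z \<le> SUv \<and>
                 (\<forall>w. w \<in> grid \<theta> \<and> I \<le> w \<and> w \<le> SUv \<longrightarrow> H z \<le> H w))) \<in> grid \<theta> \<and>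
          (I \<le> (GREATEST z. z \<in> grid \<theta> \<and> (I \<le> z \<and> z \<le> SUv \<and>
                 (\<forall>w. w \<in> grid \<theta> \<and> I \<le> w \<and> w \<le> SUv \<longrightarrow> H z \<le> H w))) \<and>
           (GREATEST z. z \<in> grid \<theta> \<and> (I \<le> z \<and> z \<le> SUv \<and>
                 (\<forall>w. w \<in> grid \<theta> \<and> I \<le> w \<and> w \<le> SUv \<longrightarrow> H z \<le> H w))) \<le> SUv \<and> True)"
      using greatest_grid[OF th, of "\<lambda>z. I \<le> z \<and> z \<le> SUv \<and>
                 (\<forall>w. w \<in> grid \<theta> \<and> I \<le> w \<and> w \<le> SUv \<longrightarrow> H z \<le> H w)" m SUv]
        m mmin unfolding B_def by auto
    thus ?thesis unfolding S_def by simp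
  qed
  have sp: "Ib0 + \<theta> \<le> s"
  proof (cases "K t = 0")
    case True thus ?thesis using Sp IbI unfolding s_def by auto
  next
    case False
    have "(LEAST z. z \<in> grid \<theta> \<and> (Ib0 + \<theta> \<le> z \<and> z \<le> S \<and> H z \<le> H S + K t)) \<in> grid \<theta> \<and>
          (Ib0 + \<theta> \<le> (LEAST z. z \<in> grid \<theta> \<and> (Ib0 + \<theta> \<le> z \<and> z \<le> S \<and> H z \<le> H S + K t)) \<and> True)"
      using least_grid[OF th, of "\<lambda>z. Ib0 + \<theta> \<le> z \<and> z \<le> S \<and> H z \<le> H S + K t" S "Ib0 + \<theta>"]
        Sp IbI Kt unfolding t_def by auto
    thus ?thesis using False unfolding s_def by simp
  qed
  show ?thesis
    unfolding q using Ilt IbI Ib sp unfolding H_def V_def t_def by auto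
qed


lemma coer_of:
  fixes f :: "real \<Rightarrow> real"
  assumes "filterlim f at_top at_infinity"
  shows "\<exists>r. \<forall>x. r \<le> \<bar>x\<bar> \<longrightarrow> B < f x"
proof -
  have "\<forall>\<^sub>F x in at_infinity. B < f x" using assms filterlim_at_top_dense by blast
  thus ?thesis unfolding eventually_at_infinity by (simp add: real_norm_def)
qed

theorem lemma4p4:
  fixes T :: nat and \<alpha> \<theta> :: real and c K :: "nat \<Rightarrow> real"
    and G :: "nat \<Rightarrow> real \<Rightarrow> real" and D :: "nat \<Rightarrow> real measure"
  assumes "T \<ge> 2" and "0 < \<alpha>" and "\<alpha> \<le> 1" and "\<theta> > 0"
    and "\<And>t. t < T \<Longrightarrow> K t \<ge> 0"
    and "\<And>t. t < T \<Longrightarrow> prob_space (D t)"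
    and "\<And>t. t < T \<Longrightarrow> sets (D t) = sets borel"
    and "\<And>t. t < T \<Longrightarrow> (AE x in D t. x \<ge> 0)"
    and "\<And>t. t < T \<Longrightarrow> integrable (D t) (\<lambda>x. x)"
    and "\<And>t. t < T \<Longrightarrow> convex_on UNIV (Cfun \<alpha> c G D t)"
    and "\<And>t. t < T \<Longrightarrow> filterlim (Cfun \<alpha> c G D t) at_top at_infinity"
    and "\<And>t. t + 2 \<le> T \<Longrightarrow> K t \<ge> \<alpha> * K (Suc t)"
    and "t + 2 \<le> T"
  shows "Hf (Cfun \<alpha> c G D) K \<alpha> \<theta> D T t (Ibarf (Cfun \<alpha> c G D) K \<alpha> \<theta> D T t - \<theta>)
         > Hf (Cfun \<alpha> c G D) K \<alpha> \<theta> D T t (If (Cfun \<alpha> c G D) K \<alpha> \<theta> D T t) + K t"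
proof -
  define C where "C = Cfun \<alpha> c G D"
  define m where "m = T - 2 - t"
  have k: "T - 1 - t = Suc m" and tm: "T - 2 - m = t" using assms(13) unfolding m_def by auto
  have coerC: "\<And>u B. u < T \<Longrightarrow> \<exists>r. \<forall>x. r \<le> \<bar>x\<bar> \<longrightarrow> B < C u x"
    unfolding C_def using assms(11) coer_of by blast
  have tlt: "t < T" using assms(13) by auto
  have Kt0: "K t \<ge> 0" using assms(5)[OF tlt] .
  define q where "q = stg C K \<alpha> \<theta> D T (Suc m)"
  define p where "p = stg C K \<alpha> \<theta> D T m"
  have st: "stI q < stIbar p - \<theta> \<and> stIbar q - \<theta> \<le> stI q
      \<and> C t (stIbar q - \<theta>) > C t (stI q) + K t
      \<and> stH q = (\<lambda>y. C t y + \<alpha> * (\<Sum>j. (if y - of_int (int j - 1) * \<theta> < sts p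
            then stH p (stS p) + K (Suc t) else stH p (y - of_int (int j - 1) * \<theta>))
             * fmass D \<theta> t (int j - 1)))"
    using stage_step[of \<theta> K T m C \<alpha> D, unfolded tm, OF assms(4) Kt0 coerC[OF tlt]]
    unfolding q_def p_def by blast
  have sp: "stIbar p \<le> sts p"
  proof (cases m)
    case 0 thus ?thesis unfolding p_def by simp
  next
    case (Suc m')
    have tm': "T - 2 - m' = Suc t" using Suc assms(13) unfolding m_def by auto
    have "Suc t < T" using Suc assms(13) unfolding m_def by auto
    thus ?thesis
      using stage_step[of \<theta> K T m' C \<alpha> D, unfolded tm', OF assms(4) assms(5)[OF \<open>Suc t < T\<close>] coerC[OF \<open>Suc t < T\<close>]] Suc
      unfolding p_def by blast
  qed
  define X where "X = (\<Sum>j. (stH p (stS p) + K (Suc t)) * fmass D \<theta> t (int j - 1))"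
  have HX: "stH q y = C t y + \<alpha> * X" if "y \<le> stI q" for y
  proof -
    have "\<And>j::nat. y - of_int (int j - 1) * \<theta> < sts p"
    proof -
      fix j :: nat
      have "- (of_int (int j - 1) * \<theta>) \<le> \<theta>" using assms(4) by (simp add: algebra_simps)
      thus "y - of_int (int j - 1) * \<theta> < sts p" using that st sp by linarith
    qed
    thus ?thesis using st unfolding X_def by simp
  qed
  have "stH q (stIbar q - \<theta>) > stH q (stI q) + K t"
    using HX[of "stIbar q - \<theta>"] HX[of "stI q"] st by auto
  thus ?thesis unfolding Hf_def Ibarf_def If_def k q_def C_def .
qed

end
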